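(* Let $x=(x_1,\dots,x_n)$ be a stochastic vector ($x_k\ge0$, $\sum_k x_k=1$) and let $y=x_1$. Then \[ \prod_{k=1}^n(1-x_k)^{1-x_k}\ \ge\ \frac{(1-y)^{1-y}}{e^{1-y}}. \]
   Context: Convention: $0^0=1$. *)

theory Defs
  imports Complex_Main
begin

definition rpow :: "real \<Rightarrow> real \<Rightarrow> real" where
  "rpow a b = (if a = 0 then (if b = 0 then 1 else 0) else a powr b)"

end

theory Submission
  imports Defs
begin

lemma key:
  fixes t :: real
  assumes "0 \<le> t" "t \<le> 1"
  shows "exp (- t) \<le> rpow (1 - t) (1 - t)"
proof (cases "t = 1")
  case True
  then show ?thesis by (simp add: rpow_def)
next
  case False
  define u where "u = 1 - t"
  have u: "0 < u" "u \<le> 1" using assms False by (auto simp: u_def)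
  have "ln (1/u) \<le> 1/u - 1" using u by (intro ln_le_minus_one) auto
  hence "- ln u \<le> 1/u - 1" using u by (simp add: ln_div)
  hence "u * (- ln u) \<le> u * (1/u - 1)" using u by (intro mult_left_mono) auto
  hence "- t \<le> u * ln u" using u by (simp add: u_def algebra_simps)
  hence "exp (-t) \<le> exp (u * ln u)" by simp
  also have "\<dots> = rpow u u" using u by (simp add: rpow_def powr_def)
  finally show ?thesis by (simp add: u_def)
qed

theorem lemma5p5:
  fixes x :: "nat \<Rightarrow> real" and n :: nat
  assumes "n \<ge> 1"
    and "\<And>k. k \<in> {1..n} \<Longrightarrow> x k \<ge> 0"
    and "(\<Sum>k=1..n. x k) = 1"
  shows "(\<Prod>k=1..n. rpow (1 - x k) (1 - x k)) \<ge> rpow (1 - x 1) (1 - x 1) / exp (1 - x 1)"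
proof -
  have le1: "x k \<le> 1" if "k \<in> {1..n}" for k
  proof -
    have "x k \<le> (\<Sum>k=1..n. x k)"
      by (rule member_le_sum) (use that assms(2) in auto)
    thus ?thesis using assms(3) by simp
  qed
  have split: "{1..n} = insert 1 {2..n}" using assms(1) by auto
  have s: "(\<Sum>k=1..n. x k) = x 1 + (\<Sum>k=2..n. x k)"
    unfolding split by (subst sum.insert) auto
  have p: "(\<Prod>k=1..n. rpow (1 - x k) (1 - x k)) = rpow (1 - x 1) (1 - x 1) * (\<Prod>k=2..n. rpow (1 - x k) (1 - x k))"
    unfolding split by (subst prod.insert) auto
  have "(\<Prod>k=2..n. exp (- x k)) \<le> (\<Prod>k=2..n. rpow (1 - x k) (1 - x k))"
    by (rule prod_mono) (use key assms(2) le1 in auto)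
  moreover have "(\<Prod>k=2..n. exp (- x k)) = exp (- (\<Sum>k=2..n. x k))"
    by (simp add: exp_sum[symmetric] sum_negf[symmetric])
  moreover have "(\<Sum>k=2..n. x k) = 1 - x 1" using s assms(3) by simp
  ultimately have q: "exp (- (1 - x 1)) \<le> (\<Prod>k=2..n. rpow (1 - x k) (1 - x k))" by simp
  have r0: "0 \<le> rpow (1 - x 1) (1 - x 1)" by (simp add: rpow_def)
  have "rpow (1 - x 1) (1 - x 1) / exp (1 - x 1) = rpow (1 - x 1) (1 - x 1) * exp (- (1 - x 1))"
    using exp_minus[of "1 - x 1"] by (simp add: divide_inverse)
  also have "\<dots> \<le> rpow (1 - x 1) (1 - x 1) * (\<Prod>k=2..n. rpow (1 - x k) (1 - x k))"
    by (rule mult_left_mono[OF q r0])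
  finally show ?thesis using p by simp
qed

end
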